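(* $\mathrm{P}^*_{\mathrm{lis}}=\mathrm{P/poly}$, where each Boolean function family $(f_n)_{n\in\mathbb N}$ is identified with the language $\{w\in\mathbb B^*: f_{|w|}(w)=T\}$.
   Context: $\mathbb B=\{T,F\}$. A primitive instruction is one of: a plain basic instruction $a$, a positive test instruction $+a$, a negative test instruction $-a$ (for a basic instruction $a$), a forward jump instruction $\#l$ ($l\in\mathbb N$), or the termination instruction $!$. An instruction sequence is a finite nonempty sequence $X=u_1;\dots;u_k$ of primitive instructions; its length is $|X|=k$. Basic instructions have the form $f.m$ where the focus $f$ is one of $\mathrm{in}{:}i$, $\mathrm{aux}{:}i$ ($i\ge 1$) or $\mathrm{out}$, each naming a Boolean register, and the method $m$ is one of $\mathrm{set}{:}T$, $\mathrm{set}{:}F$, $\mathrm{get}$. Executing $f.\mathrm{set}{:}b$ sets register $f$ to $b$ and yields reply $b$; executing $f.\mathrm{get}$ leaves the register unchanged and yields its content as reply. Execution of $X=u_1;\dots;u_k$: a counter starts at $1$. If the counter exceeds $k$, execution deadlocks. At position $i$: if $u_i=!$, execution terminates; if $u_i=\#l$, execution deadlocks if $l=0$ and otherwise the counter becomes $i+l$; if $u_i$ is $a$, $+a$ or $-a$, the basic instruction $a$ is executed yielding reply $r$, and the counter becomes $i+1$ for $u_i=a$; for $u_i=+a$ it becomes $i+1$ if $r=T$ and $i+2$ if $r=F$; for $u_i=-a$ it becomes $i+1$ if $r=F$ and $i+2$ if $r=T$. $\mathrm{IS}_{br}$ is the set of instruction sequences in which every basic instruction occurring belongs to $\{f.\mathrm{get}: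 f=\mathrm{in}{:}i \text{ or } f=\mathrm{aux}{:}i\}\cup\{f.\mathrm{set}{:}b: f=\mathrm{aux}{:}i \text{ or } f=\mathrm{out},\ b\in\mathbb B\}$. $X\in\mathrm{IS}_{br}$ computes $f:\mathbb B^n\to\mathbb B$ if for every $(b_1,\dots,b_n)\in\mathbb B^n$: when $X$ is executed with register $\mathrm{in}{:}j$ initialised to $b_j$ ($j\le n$) and all registers $\mathrm{aux}{:}i$ and $\mathrm{out}$ initialised to $F$, execution terminates (does not deadlock) without ever executing a basic instruction with focus $\mathrm{in}{:}j$ for $j>n$, and at termination register $\mathrm{out}$ contains $f(b_1,\dots,b_n)$. A Boolean function family is a sequence $(f_n)_{n\in\mathbb N}$ with $f_n:\mathbb B^n\to\mathbb B$. $\mathrm{P}^*_{\mathrm{lis}}$ is the class of Boolean function families $(f_n)$ for which there is a polynomial $h:\mathbb N\to\mathbb N$ such that for every $n$ there is $X\in\mathrm{IS}_{br}$ computing $f_n$ with $|X|\le h(n)$. $\mathrm{P/poly}$ is the usual class of languages decided by polynomial-size Boolean circuit families (equivalently, by polynomial-time Turing machines with polynomial-length advice). *)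

theory Defs
  imports "HOL-Computational_Algebra.Polynomial"
begin

datatype focus = FIn nat | FAux nat | FOut
datatype meth = MSet bool | MGet
type_synonym basic = "focus \<times> meth"

datatype instr =
    Plain basic
  | PosTest basic
  | NegTest basic
  | Jump nat
  | Term

text \<open>Register state: contents of the aux registers and of the out register.
  The in registers are never written by members of IS_br, so their contents
  are given by the input word (register in:j holds w ! (j-1)).\<close>
type_synonym regs = "(nat \<Rightarrow> bool) \<times> bool"

text \<open>Executing a basic instruction on input word w. None means execution
  of a forbidden instruction (in particular in:j with j > length w).\<close>
fun exec_basic :: "bool list \<Rightarrow> basic \<Rightarrow> regs \<Rightarrow> (bool \<times> regs) option" where
  "exec_basic w (FIn j, MGet) s =
     (if 1 \<le> j \<and> j \<le> length w then Some (w ! (j - 1), s) else None)"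
| "exec_basic w (FIn j, MSet b) s = None"
| "exec_basic w (FAux i, MGet) (a, ov) = Some (a i, (a, ov))"
| "exec_basic w (FAux i, MSet b) (a, ov) = Some (b, (a(i := b), ov))"
| "exec_basic w (FOut, MGet) (a, ov) = Some (ov, (a, ov))"
| "exec_basic w (FOut, MSet b) (a, ov) = Some (b, (a, b))"

text \<open>terminates X w i s r: execution of X on input w, started with counter i
  (1-based) and register state s, terminates (without deadlock and without
  forbidden instructions) with register out containing r.\<close>
inductive terminates :: "instr list \<Rightarrow> bool list \<Rightarrow> nat \<Rightarrow> regs \<Rightarrow> bool \<Rightarrow> bool"
  for X w where
  halt: "\<lbrakk>1 \<le> i; i \<le> length X; X ! (i - 1) = Term\<rbrakk> \<Longrightarrow> terminates X w i s (snd s)"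
| jump: "\<lbrakk>1 \<le> i; i \<le> length X; X ! (i - 1) = Jump l; l \<noteq> 0;
          terminates X w (i + l) s r\<rbrakk> \<Longrightarrow> terminates X w i s r"
| plain: "\<lbrakk>1 \<le> i; i \<le> length X; X ! (i - 1) = Plain a;
          exec_basic w a s = Some (rep, s'); terminates X w (i + 1) s' r\<rbrakk>
          \<Longrightarrow> terminates X w i s r"
| pos: "\<lbrakk>1 \<le> i; i \<le> length X; X ! (i - 1) = PosTest a;
          exec_basic w a s = Some (rep, s');
          terminates X w (if rep then i + 1 else i + 2) s' r\<rbrakk>
          \<Longrightarrow> terminates X w i s r"
| neg: "\<lbrakk>1 \<le> i; i \<le> length X; X ! (i - 1) = NegTest a;
          exec_basic w a s = Some (rep, s');
          terminates X w (if rep then i + 2 else i + 1) s' r\<rbrakk>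
          \<Longrightarrow> terminates X w i s r"

fun allowed_basic :: "basic \<Rightarrow> bool" where
  "allowed_basic (FIn i, MGet) = (1 \<le> i)"
| "allowed_basic (FAux i, MGet) = (1 \<le> i)"
| "allowed_basic (FAux i, MSet b) = (1 \<le> i)"
| "allowed_basic (FOut, MSet b) = True"
| "allowed_basic _ = False"

fun instr_ok :: "instr \<Rightarrow> bool" where
  "instr_ok (Plain a) = allowed_basic a"
| "instr_ok (PosTest a) = allowed_basic a"
| "instr_ok (NegTest a) = allowed_basic a"
| "instr_ok (Jump l) = True"
| "instr_ok Term = True"

definition IS_br :: "instr list set" where
  "IS_br = {X. X \<noteq> [] \<and> (\<forall>u \<in> set X. instr_ok u)}"

text \<open>A Boolean function on B^n is represented as a predicate on bool lists,
  only its values on lists of length n mattering.\<close>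
definition computes :: "instr list \<Rightarrow> nat \<Rightarrow> (bool list \<Rightarrow> bool) \<Rightarrow> bool" where
  "computes X n f \<longleftrightarrow>
     (\<forall>w. length w = n \<longrightarrow> terminates X w 1 (\<lambda>_. False, False) (f w))"

definition P_lis :: "(nat \<Rightarrow> bool list \<Rightarrow> bool) set" where
  "P_lis = {F. \<exists>h :: nat poly. \<forall>n. \<exists>X. X \<in> IS_br \<and> computes X n (F n) \<and> length X \<le> poly h n}"

definition lang_of :: "(nat \<Rightarrow> bool list \<Rightarrow> bool) \<Rightarrow> bool list set" where
  "lang_of F = {w. F (length w) w}"

text \<open>A circuit over basis {const, not, and, or} (fan-in at most 2) is a list of
  gates; gate k may refer to inputs (0-based) and to earlier gates i < k.\<close>
datatype gate = GIn nat | GConst bool | GNot nat | GAnd nat nat | GOr nat nat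

fun gate_val :: "bool list \<Rightarrow> bool list \<Rightarrow> gate \<Rightarrow> bool" where
  "gate_val w vs (GIn j) = w ! j"
| "gate_val w vs (GConst b) = b"
| "gate_val w vs (GNot i) = (\<not> vs ! i)"
| "gate_val w vs (GAnd i j) = (vs ! i \<and> vs ! j)"
| "gate_val w vs (GOr i j) = (vs ! i \<or> vs ! j)"

fun gate_ok :: "nat \<Rightarrow> nat \<Rightarrow> gate \<Rightarrow> bool" where
  "gate_ok n k (GIn j) = (j < n)"
| "gate_ok n k (GConst b) = True"
| "gate_ok n k (GNot i) = (i < k)"
| "gate_ok n k (GAnd i j) = (i < k \<and> j < k)"
| "gate_ok n k (GOr i j) = (i < k \<and> j < k)"

definition wf_circuit :: "nat \<Rightarrow> gate list \<Rightarrow> bool" where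
  "wf_circuit n C \<longleftrightarrow> C \<noteq> [] \<and> (\<forall>k < length C. gate_ok n k (C ! k))"

definition circuit_vals :: "bool list \<Rightarrow> gate list \<Rightarrow> bool list" where
  "circuit_vals w C = fold (\<lambda>g vs. vs @ [gate_val w vs g]) C []"

definition circuit_out :: "bool list \<Rightarrow> gate list \<Rightarrow> bool" where
  "circuit_out w C = last (circuit_vals w C)"

definition P_poly :: "bool list set set" where
  "P_poly = {L. \<exists>h :: nat poly. \<forall>n. \<exists>C. wf_circuit n C \<and> length C \<le> poly h n \<and>
      (\<forall>w. length w = n \<longrightarrow> (circuit_out w C \<longleftrightarrow> w \<in> L))}"

end

theory Submission imports Defs begin

lemma cv_snoc: "circuit_vals w (C @ [g]) = circuit_vals w C @ [gate_val w (circuit_vals w C) g]"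
  by (simp add: circuit_vals_def)

lemma cv_len[simp]: "length (circuit_vals w C) = length C"
  by (induction C rule: rev_induct) (auto simp: cv_snoc, simp add: circuit_vals_def)

definition cc :: "nat \<Rightarrow> nat \<Rightarrow> (bool list \<Rightarrow> bool) set \<Rightarrow> bool" where
  "cc n m S \<longleftrightarrow> (\<exists>C. length C \<le> m \<and> (\<forall>k<length C. gate_ok n k (C!k)) \<and>
     (\<forall>f\<in>S. \<exists>p<length C. \<forall>w. length w = n \<longrightarrow> circuit_vals w C ! p = f w))"

lemma cc_empty: "cc n 0 {}"
  unfolding cc_def by (rule exI[of _ "[]"]) simp

lemma cc_mono: "cc n m S \<Longrightarrow> m \<le> m' \<Longrightarrow> S' \<subseteq> S \<Longrightarrow> cc n m' S'"
  unfolding cc_def apply (elim exE conjE) subgoal for C by (rule exI[of _ C]) auto done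

lemma cc_add:
  assumes cc: "cc n m S"
  and G: "\<And>C. (\<forall>f\<in>S. \<exists>p<length C. \<forall>w. length w = n \<longrightarrow> circuit_vals w C ! p = f w) \<Longrightarrow>
     \<exists>g. gate_ok n (length C) g \<and> (\<forall>w. length w = n \<longrightarrow> gate_val w (circuit_vals w C) g = h w)"
  shows "cc n (Suc m) (insert h S)"
proof -
  obtain C where C: "length C \<le> m" "\<forall>k<length C. gate_ok n k (C!k)"
    "\<forall>f\<in>S. \<exists>p<length C. \<forall>w. length w = n \<longrightarrow> circuit_vals w C ! p = f w"
    using cc unfolding cc_def by blast
  obtain g where g: "gate_ok n (length C) g" "\<forall>w. length w = n \<longrightarrow> gate_val w (circuit_vals w C) g = h w"
    using G[OF C(3)] by blast
  have "length (C @ [g]) \<le> Suc m" using C(1) by simp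
  moreover have "\<forall>k<length (C @ [g]). gate_ok n k ((C @ [g])!k)"
    using C(2) g(1) by (auto simp: nth_append less_Suc_eq)
  moreover have "\<forall>f\<in>insert h S. \<exists>p<length (C @ [g]). \<forall>w. length w = n \<longrightarrow> circuit_vals w (C @ [g]) ! p = f w"
  proof
    fix f assume "f \<in> insert h S"
    then show "\<exists>p<length (C @ [g]). \<forall>w. length w = n \<longrightarrow> circuit_vals w (C @ [g]) ! p = f w"
    proof
      assume "f = h"
      then show ?thesis using g(2) by (intro exI[of _ "length C"]) (simp add: cv_snoc nth_append)
    next
      assume "f \<in> S"
      then obtain p where "p < length C" "\<forall>w. length w = n \<longrightarrow> circuit_vals w C ! p = f w" using C(3) by blast
      then show ?thesis by (intro exI[of _ p]) (simp add: cv_snoc nth_append)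
    qed
  qed
  ultimately show ?thesis unfolding cc_def by blast
qed

lemma idx: "f \<in> S \<Longrightarrow> \<forall>f\<in>S. \<exists>p<length C. \<forall>w. length w = n \<longrightarrow> circuit_vals w C ! p = f w \<Longrightarrow>
   \<exists>p<length C. \<forall>w. length w = n \<longrightarrow> circuit_vals w C ! p = f w" by blast

datatype bexp = BV "bool list \<Rightarrow> bool" | BI nat | BC bool | BN bexp | BA bexp bexp | BO bexp bexp

fun ev :: "bexp \<Rightarrow> bool list \<Rightarrow> bool" where
  "ev (BV f) w = f w"
| "ev (BI j) w = w ! j"
| "ev (BC b) w = b"
| "ev (BN e) w = (\<not> ev e w)"
| "ev (BA a b) w = (ev a w \<and> ev b w)"
| "ev (BO a b) w = (ev a w \<or> ev b w)"

fun atoms :: "bexp \<Rightarrow> (bool list \<Rightarrow> bool) set" where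
  "atoms (BV f) = {f}"
| "atoms (BI j) = {}"
| "atoms (BC b) = {}"
| "atoms (BN e) = atoms e"
| "atoms (BA a b) = atoms a \<union> atoms b"
| "atoms (BO a b) = atoms a \<union> atoms b"

fun ins_ok :: "nat \<Rightarrow> bexp \<Rightarrow> bool" where
  "ins_ok n (BI j) = (j < n)"
| "ins_ok n (BN e) = ins_ok n e"
| "ins_ok n (BA a b) = (ins_ok n a \<and> ins_ok n b)"
| "ins_ok n (BO a b) = (ins_ok n a \<and> ins_ok n b)"
| "ins_ok n _ = True"

fun sz :: "bexp \<Rightarrow> nat" where
  "sz (BN e) = Suc (sz e)"
| "sz (BA a b) = Suc (sz a + sz b)"
| "sz (BO a b) = Suc (sz a + sz b)"
| "sz _ = 1"

lemma cc_ev: "cc n m S \<Longrightarrow> atoms e \<subseteq> S \<Longrightarrow> ins_ok n e \<Longrightarrow> cc n (m + sz e) (insert (ev e) S)"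
proof (induction e arbitrary: m S)
  case (BV f)
  have "ev (BV f) = f" by (rule ext) simp
  moreover have "f \<in> S" using BV.prems(2) by simp
  moreover have "cc n (m + sz (BV f)) S" using BV.prems(1) by (rule cc_mono) simp_all
  ultimately show ?case by (simp add: insert_absorb)
next
  case (BI j)
  have "cc n (Suc m) (insert (ev (BI j)) S)"
    by (rule cc_add[OF BI(1)], rule exI[of _ "GIn j"]) (use BI(3) in auto)
  then show ?case by (simp del: ev.simps)
next
  case (BC b)
  have "cc n (Suc m) (insert (ev (BC b)) S)"
    by (rule cc_add[OF BC(1)], rule exI[of _ "GConst b"]) auto
  then show ?case by (simp del: ev.simps)
next
  case (BN e)
  have c1: "cc n (m + sz e) (insert (ev e) S)"
    using BN.IH[OF BN.prems(1)] BN.prems(2,3) by simp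
  have "cc n (Suc (m + sz e)) (insert (ev (BN e)) (insert (ev e) S))"
  proof (rule cc_add[OF c1])
    fix C assume H: "\<forall>f\<in>insert (ev e) S. \<exists>p<length C. \<forall>w. length w = n \<longrightarrow> circuit_vals w C ! p = f w"
    have "\<exists>p<length C. \<forall>w. length w = n \<longrightarrow> circuit_vals w C ! p = ev e w"
      by (rule bspec[OF H]) simp
    then obtain p where "p < length C" "\<forall>w. length w = n \<longrightarrow> circuit_vals w C ! p = ev e w" by blast
    then show "\<exists>g. gate_ok n (length C) g \<and> (\<forall>w. length w = n \<longrightarrow> gate_val w (circuit_vals w C) g = ev (BN e) w)"
      by (intro exI[of _ "GNot p"]) simp
  qed
  then show ?case by (rule cc_mono) (simp, blast)
next
  case (BA a b)
  have aa: "atoms a \<subseteq> S" using BA.prems(2) by simp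
  have c1: "cc n (m + sz a) (insert (ev a) S)"
    using BA.IH(1)[OF BA.prems(1) aa] BA.prems(3) by simp
  have ab: "atoms b \<subseteq> S" using BA.prems(2) by simp
  then have ab': "atoms b \<subseteq> insert (ev a) S" by blast
  have c2: "cc n (m + sz a + sz b) (insert (ev b) (insert (ev a) S))"
    using BA.IH(2)[OF c1 ab'] BA.prems(3) by simp
  have "cc n (Suc (m + sz a + sz b)) (insert (ev (BA a b)) (insert (ev b) (insert (ev a) S)))"
  proof (rule cc_add[OF c2])
    fix C assume H: "\<forall>f\<in>insert (ev b) (insert (ev a) S). \<exists>p<length C. \<forall>w. length w = n \<longrightarrow> circuit_vals w C ! p = f w"
    have ha: "\<exists>p<length C. \<forall>w. length w = n \<longrightarrow> circuit_vals w C ! p = ev a w"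
      by (rule bspec[OF H]) simp
    have hb: "\<exists>p<length C. \<forall>w. length w = n \<longrightarrow> circuit_vals w C ! p = ev b w"
      by (rule bspec[OF H]) simp
    obtain p where "p < length C" "\<forall>w. length w = n \<longrightarrow> circuit_vals w C ! p = ev a w" using ha by blast
    moreover obtain q where "q < length C" "\<forall>w. length w = n \<longrightarrow> circuit_vals w C ! q = ev b w" using hb by blast
    ultimately show "\<exists>g. gate_ok n (length C) g \<and> (\<forall>w. length w = n \<longrightarrow> gate_val w (circuit_vals w C) g = ev (BA a b) w)"
      by (intro exI[of _ "GAnd p q"]) simp
  qed
  then show ?case by (rule cc_mono) (simp, blast)
next
  case (BO a b)
  have aa: "atoms a \<subseteq> S" using BO.prems(2) by simp
  have c1: "cc n (m + sz a) (insert (ev a) S)"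
    using BO.IH(1)[OF BO.prems(1) aa] BO.prems(3) by simp
  have ab: "atoms b \<subseteq> S" using BO.prems(2) by simp
  then have ab': "atoms b \<subseteq> insert (ev a) S" by blast
  have c2: "cc n (m + sz a + sz b) (insert (ev b) (insert (ev a) S))"
    using BO.IH(2)[OF c1 ab'] BO.prems(3) by simp
  have "cc n (Suc (m + sz a + sz b)) (insert (ev (BO a b)) (insert (ev b) (insert (ev a) S)))"
  proof (rule cc_add[OF c2])
    fix C assume H: "\<forall>f\<in>insert (ev b) (insert (ev a) S). \<exists>p<length C. \<forall>w. length w = n \<longrightarrow> circuit_vals w C ! p = f w"
    have ha: "\<exists>p<length C. \<forall>w. length w = n \<longrightarrow> circuit_vals w C ! p = ev a w"
      by (rule bspec[OF H]) simp
    have hb: "\<exists>p<length C. \<forall>w. length w = n \<longrightarrow> circuit_vals w C ! p = ev b w"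
      by (rule bspec[OF H]) simp
    obtain p where "p < length C" "\<forall>w. length w = n \<longrightarrow> circuit_vals w C ! p = ev a w" using ha by blast
    moreover obtain q where "q < length C" "\<forall>w. length w = n \<longrightarrow> circuit_vals w C ! q = ev b w" using hb by blast
    ultimately show "\<exists>g. gate_ok n (length C) g \<and> (\<forall>w. length w = n \<longrightarrow> gate_val w (circuit_vals w C) g = ev (BO a b) w)"
      by (intro exI[of _ "GOr p q"]) simp
  qed
  then show ?case by (rule cc_mono) (simp, blast)
qed

lemma cc_ev':
  assumes "cc n m S" "atoms e \<subseteq> S" "ins_ok n e" "\<forall>w. length w = n \<longrightarrow> ev e w = f w" "sz e \<le> c"
  shows "cc n (m + c) (insert f S)"
proof -
  have "cc n (m + sz e) (insert (ev e) S)" using cc_ev assms by blast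
  then obtain C where C: "length C \<le> m + sz e" "\<forall>k<length C. gate_ok n k (C!k)"
    "\<forall>g\<in>insert (ev e) S. \<exists>p<length C. \<forall>w. length w = n \<longrightarrow> circuit_vals w C ! p = g w"
    unfolding cc_def by blast
  have "\<forall>g\<in>insert f S. \<exists>p<length C. \<forall>w. length w = n \<longrightarrow> circuit_vals w C ! p = g w"
    using C(3) assms(4) by auto
  then show ?thesis unfolding cc_def using C(1,2) assms(5) by (intro exI[of _ C]) auto
qed

lemma cc_list:
  "cc n m S \<Longrightarrow> \<forall>f\<in>set fs. \<exists>e. atoms e \<subseteq> S \<and> ins_ok n e \<and> sz e \<le> c \<and> (\<forall>w. length w = n \<longrightarrow> ev e w = f w)
   \<Longrightarrow> cc n (m + length fs * c) (S \<union> set fs)"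
proof (induction fs arbitrary: m S)
  case Nil then show ?case by simp
next
  case (Cons f fs)
  obtain e where e: "atoms e \<subseteq> S" "ins_ok n e" "sz e \<le> c" "\<forall>w. length w = n \<longrightarrow> ev e w = f w"
    using Cons.prems(2) by auto
  have c1: "cc n (m + c) (insert f S)" using cc_ev'[OF Cons.prems(1) e(1,2,4,3)] .
  have "cc n (m + c + length fs * c) (insert f S \<union> set fs)"
  proof (rule Cons.IH[OF c1])
    show "\<forall>g\<in>set fs. \<exists>e. atoms e \<subseteq> insert f S \<and> ins_ok n e \<and> sz e \<le> c \<and> (\<forall>w. length w = n \<longrightarrow> ev e w = g w)"
    proof
      fix g assume "g \<in> set fs"
      then obtain e where "atoms e \<subseteq> S" "ins_ok n e" "sz e \<le> c" "\<forall>w. length w = n \<longrightarrow> ev e w = g w"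
        using Cons.prems(2) by auto
      then show "\<exists>e. atoms e \<subseteq> insert f S \<and> ins_ok n e \<and> sz e \<le> c \<and> (\<forall>w. length w = n \<longrightarrow> ev e w = g w)"
        by blast
    qed
  qed
  then show ?case by (simp add: add.assoc)
qed

lemma cc_out:
  assumes "cc n m S" "f \<in> S"
  shows "\<exists>C. wf_circuit n C \<and> length C \<le> Suc m \<and> (\<forall>w. length w = n \<longrightarrow> circuit_out w C = f w)"
proof -
  obtain C where C: "length C \<le> m" "\<forall>k<length C. gate_ok n k (C!k)"
    "\<forall>g\<in>S. \<exists>p<length C. \<forall>w. length w = n \<longrightarrow> circuit_vals w C ! p = g w"
    using assms(1) unfolding cc_def by blast
  obtain p where p: "p < length C" "\<forall>w. length w = n \<longrightarrow> circuit_vals w C ! p = f w" using C(3) assms(2) by blast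
  define C' where "C' = C @ [GOr p p]"
  have "wf_circuit n C'" using C(2) p(1) by (auto simp: wf_circuit_def C'_def nth_append less_Suc_eq)
  moreover have "length C' \<le> Suc m" using C(1) by (simp add: C'_def)
  moreover have "\<forall>w. length w = n \<longrightarrow> circuit_out w C' = f w"
    using p by (simp add: C'_def circuit_out_def cv_snoc)
  ultimately show ?thesis by blast
qed

fun bor :: "bexp list \<Rightarrow> bexp" where
  "bor [] = BC False"
| "bor (e # es) = BO e (bor es)"

lemma ev_bor: "ev (bor es) w = (\<exists>e\<in>set es. ev e w)" by (induction es) auto
lemma atoms_bor: "atoms (bor es) = (\<Union>e\<in>set es. atoms e)" by (induction es) auto
lemma ins_bor: "ins_ok n (bor es) = (\<forall>e\<in>set es. ins_ok n e)" by (induction es) auto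
lemma sz_bor: "\<forall>e\<in>set es. sz e \<le> c \<Longrightarrow> sz (bor es) \<le> Suc (length es * Suc c)"
proof (induction es)
  case Nil then show ?case by simp
next
  case (Cons e es)
  have a: "sz (bor es) \<le> Suc (length es * Suc c)" using Cons by simp
  have b: "sz e \<le> c" using Cons.prems by simp
  show ?case using a b by simp
qed


definition s0 :: regs where "s0 = (\<lambda>_. False, False)"

fun nxt :: "instr list \<Rightarrow> bool list \<Rightarrow> nat \<times> regs \<Rightarrow> (nat \<times> regs) option" where
  "nxt X w (i, s) = (if 1 \<le> i \<and> i \<le> length X then (case X ! (i - 1) of
      Term \<Rightarrow> None
    | Jump l \<Rightarrow> if l = 0 then None else Some (i + l, s)
    | Plain a \<Rightarrow> (case exec_basic w a s of None \<Rightarrow> None | Some (rep, s') \<Rightarrow> Some (i + 1, s'))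
    | PosTest a \<Rightarrow> (case exec_basic w a s of None \<Rightarrow> None
         | Some (rep, s') \<Rightarrow> Some (if rep then i + 1 else i + 2, s'))
    | NegTest a \<Rightarrow> (case exec_basic w a s of None \<Rightarrow> None
         | Some (rep, s') \<Rightarrow> Some (if rep then i + 2 else i + 1, s'))) else None)"

lemma nxt_term: "nxt X w (i, s) = Some (j, s') \<Longrightarrow> terminates X w j s' r \<Longrightarrow> terminates X w i s r"
  apply (simp split: if_splits instr.splits option.splits prod.splits)
  apply (auto intro: terminates.intros)
  done

lemma nxt_mono: "nxt X w (i, s) = Some (j, s') \<Longrightarrow> i < j \<and> 1 \<le> i \<and> i \<le> length X"
  by (simp split: if_splits instr.splits option.splits prod.splits)


declare nxt.simps[simp del]

fun run :: "instr list \<Rightarrow> bool list \<Rightarrow> nat \<times> regs \<Rightarrow> nat \<Rightarrow> (nat \<times> regs) option" where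
  "run X w c 0 = Some c"
| "run X w c (Suc t) = (case run X w c t of None \<Rightarrow> None | Some c' \<Rightarrow> nxt X w c')"

lemma run_shift: "nxt X w c = Some c' \<Longrightarrow> run X w c (Suc t) = run X w c' t"
  by (induction t) (auto split: option.splits)

lemma term_run: "terminates X w i s r \<Longrightarrow> \<exists>t j s'. run X w (i, s) t = Some (j, s') \<and> 1 \<le> j \<and> j \<le> length X \<and>
   X ! (j - 1) = Term \<and> r = snd s'"
proof (induction rule: terminates.induct)
  case (halt i s)
  show ?case by (rule exI[of _ 0], rule exI[of _ i], rule exI[of _ s]) (use halt in simp)
next
  case (jump i l s r)
  then obtain t j s' where R1: "run X w (i + l, s) t = Some (j, s')" and R2: "1 \<le> j \<and> j \<le> length X \<and> X ! (j - 1) = Term \<and> r = snd s'" by blast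
  have N: "nxt X w (i, s) = Some (i + l, s)" using jump by (simp add: nxt.simps)
  have "run X w (i, s) (Suc t) = Some (j, s')" using R1 run_shift[OF N] by simp
  then show ?case using R2 by blast
next
  case (plain i a s rep s' r)
  then obtain t j s'' where R1: "run X w (i + 1, s') t = Some (j, s'')" and R2: "1 \<le> j \<and> j \<le> length X \<and> X ! (j - 1) = Term \<and> r = snd s''" by blast
  have N: "nxt X w (i, s) = Some (i + 1, s')" using plain by (simp add: nxt.simps)
  have "run X w (i, s) (Suc t) = Some (j, s'')" using R1 run_shift[OF N] by simp
  then show ?case using R2 by blast
next
  case (pos i a s rep s' r)
  then obtain t j s'' where R1: "run X w (if rep then i + 1 else i + 2, s') t = Some (j, s'')" and R2: "1 \<le> j \<and> j \<le> length X \<and> X ! (j - 1) = Term \<and> r = snd s''" by blast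
  have N: "nxt X w (i, s) = Some (if rep then i + 1 else i + 2, s')" using pos by (simp add: nxt.simps)
  have "run X w (i, s) (Suc t) = Some (j, s'')" using R1 run_shift[OF N] by simp
  then show ?case using R2 by blast
next
  case (neg i a s rep s' r)
  then obtain t j s'' where R1: "run X w (if rep then i + 2 else i + 1, s') t = Some (j, s'')" and R2: "1 \<le> j \<and> j \<le> length X \<and> X ! (j - 1) = Term \<and> r = snd s''" by blast
  have N: "nxt X w (i, s) = Some (if rep then i + 2 else i + 1, s')" using neg by (simp add: nxt.simps)
  have "run X w (i, s) (Suc t) = Some (j, s'')" using R1 run_shift[OF N] by simp
  then show ?case using R2 by blast
qed

lemma run_SucD: "run X w c (Suc t) = Some (j, s') \<Longrightarrow> \<exists>i s. run X w c t = Some (i, s) \<and> nxt X w (i, s) = Some (j, s')"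
  by (auto split: option.splits)

lemma run_pc_lt: "run X w c t' = Some (j, s') \<Longrightarrow> run X w c t = Some (i, s) \<Longrightarrow> t < t' \<Longrightarrow> i < j"
proof (induction t' arbitrary: j s')
  case 0 then show ?case by simp
next
  case (Suc t')
  obtain i' s'' where A: "run X w c t' = Some (i', s'')" "nxt X w (i', s'') = Some (j, s')"
    using run_SucD[OF Suc.prems(1)] by blast
  have "i' < j" using nxt_mono[OF A(2)] by simp
  show ?case
  proof (cases "t = t'")
    case True then show ?thesis using A Suc.prems(2) \<open>i' < j\<close> by simp
  next
    case False then have "t < t'" using Suc.prems(3) by simp
    then show ?thesis using Suc.IH[OF A(1) Suc.prems(2)] \<open>i' < j\<close> by simp
  qed
qed

lemma run_inj: "run X w c t = Some (i, s) \<Longrightarrow> run X w c t' = Some (i, s') \<Longrightarrow> t = t'"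
proof (rule ccontr)
  assume a: "run X w c t = Some (i, s)" "run X w c t' = Some (i, s')" "t \<noteq> t'"
  then consider "t < t'" | "t' < t" by linarith
  then show False
  proof cases
    case 1 then show False using run_pc_lt[OF a(2) a(1)] by simp
  next
    case 2 then show False using run_pc_lt[OF a(1) a(2)] by simp
  qed
qed

lemma run_none: "run X w c t = None \<Longrightarrow> t \<le> t' \<Longrightarrow> run X w c t' = None"
proof (induction t')
  case 0 then show ?case by simp
next
  case (Suc t')
  show ?case
  proof (cases "t = Suc t'")
    case True then show ?thesis using Suc.prems(1) by simp
  next
    case False then have "t \<le> t'" using Suc.prems(2) by simp
    then have "run X w c t' = None" using Suc.IH Suc.prems(1) by simp
    then show ?thesis by simp
  qed
qed

definition Reach :: "instr list \<Rightarrow> bool list \<Rightarrow> nat \<Rightarrow> regs \<Rightarrow> bool" where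
  "Reach X w j s \<longleftrightarrow> (\<exists>t. run X w (1, s0) t = Some (j, s))"

lemma reach_uniq: "Reach X w j s \<Longrightarrow> Reach X w j s' \<Longrightarrow> s = s'"
proof -
  assume "Reach X w j s" "Reach X w j s'"
  then obtain t t' where "run X w (1, s0) t = Some (j, s)" "run X w (1, s0) t' = Some (j, s')"
    unfolding Reach_def by blast
  moreover then have "t = t'" by (rule run_inj)
  ultimately show "s = s'" by simp
qed

definition A :: "instr list \<Rightarrow> nat \<Rightarrow> bool list \<Rightarrow> bool" where
  "A X j w \<longleftrightarrow> (\<exists>s. Reach X w j s)"
definition Bx :: "instr list \<Rightarrow> nat \<Rightarrow> nat \<Rightarrow> bool list \<Rightarrow> bool" where
  "Bx X j r w \<longleftrightarrow> (\<exists>s. Reach X w j s \<and> fst s r)"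
definition Bo :: "instr list \<Rightarrow> nat \<Rightarrow> bool list \<Rightarrow> bool" where
  "Bo X j w \<longleftrightarrow> (\<exists>s. Reach X w j s \<and> snd s)"
definition stv :: "instr list \<Rightarrow> bool list \<Rightarrow> nat \<Rightarrow> regs" where
  "stv X w j = (\<lambda>r. Bx X j r w, Bo X j w)"

lemma reach_stv: "Reach X w j s \<Longrightarrow> s = stv X w j"
proof -
  assume R: "Reach X w j s"
  have "Bx X j r w \<longleftrightarrow> fst s r" for r
  proof
    assume "Bx X j r w" then obtain s' where "Reach X w j s'" "fst s' r" unfolding Bx_def by blast
    with reach_uniq[OF R] show "fst s r" by simp
  next
    assume "fst s r" then show "Bx X j r w" unfolding Bx_def using R by blast
  qed
  then have "fst s = (\<lambda>r. Bx X j r w)" by (simp add: fun_eq_iff)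
  moreover have "snd s = Bo X j w"
  proof
    assume "Bo X j w" then obtain s' where "Reach X w j s'" "snd s'" unfolding Bo_def by blast
    with reach_uniq[OF R] show "snd s" by simp
  next
    assume "snd s" then show "Bo X j w" unfolding Bo_def using R by blast
  qed
  ultimately show ?thesis unfolding stv_def by (simp add: prod_eq_iff)
qed

lemma reach_1: "Reach X w 1 s \<longleftrightarrow> s = s0"
proof
  assume R: "Reach X w 1 s"
  have "Reach X w 1 s0" unfolding Reach_def by (rule exI[of _ 0]) simp
  then show "s = s0" using reach_uniq[OF R] by simp
next
  assume "s = s0" then show "Reach X w 1 s" unfolding Reach_def by (intro exI[of _ 0]) simp
qed

lemma reach_rec: "j \<noteq> 1 \<Longrightarrow> Reach X w j s' \<longleftrightarrow>
   (\<exists>i. 1 \<le> i \<and> i < j \<and> A X i w \<and> nxt X w (i, stv X w i) = Some (j, s'))"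
proof
  assume j: "j \<noteq> 1" and R: "Reach X w j s'"
  then obtain t where t: "run X w (1, s0) t = Some (j, s')" unfolding Reach_def by blast
  with j obtain t0 where t0: "t = Suc t0" by (cases t) auto
  then obtain i s where ij: "run X w (1, s0) t0 = Some (i, s)" "nxt X w (i, s) = Some (j, s')"
    using run_SucD t by blast
  have Ri: "Reach X w i s" using ij(1) unfolding Reach_def by blast
  then have "s = stv X w i" by (rule reach_stv)
  then show "\<exists>i. 1 \<le> i \<and> i < j \<and> A X i w \<and> nxt X w (i, stv X w i) = Some (j, s')"
    using ij nxt_mono[OF ij(2)] Ri unfolding A_def by blast
next
  assume "\<exists>i. 1 \<le> i \<and> i < j \<and> A X i w \<and> nxt X w (i, stv X w i) = Some (j, s')"
  then obtain i s where i: "Reach X w i s" "nxt X w (i, stv X w i) = Some (j, s')" unfolding A_def by blast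
  then have "s = stv X w i" using reach_stv by blast
  moreover obtain t where "run X w (1, s0) t = Some (i, s)" using i(1) unfolding Reach_def by blast
  ultimately have "run X w (1, s0) (Suc t) = Some (j, s')" using i(2) by simp
  then show "Reach X w j s'" unfolding Reach_def by blast
qed

lemma halt_none: "1 \<le> j \<Longrightarrow> j \<le> length X \<Longrightarrow> X ! (j - 1) = Term \<Longrightarrow> nxt X w (j, s) = None"
  by (simp add: nxt.simps)

lemma final_char:
  assumes T: "terminates X w 1 s0 r"
  shows "r = (\<exists>j. 1 \<le> j \<and> j \<le> length X \<and> X ! (j - 1) = Term \<and> Bo X j w)"
proof -
  obtain t j s' where A1: "run X w (1, s0) t = Some (j, s')" "1 \<le> j" "j \<le> length X" "X ! (j - 1) = Term" "r = snd s'"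
    using term_run[OF T] by blast
  show ?thesis
  proof
    assume r then show "\<exists>j. 1 \<le> j \<and> j \<le> length X \<and> X ! (j - 1) = Term \<and> Bo X j w"
      using A1 unfolding Bo_def Reach_def by blast
  next
    assume "\<exists>j. 1 \<le> j \<and> j \<le> length X \<and> X ! (j - 1) = Term \<and> Bo X j w"
    then obtain j2 s2 t2 where B: "1 \<le> j2" "j2 \<le> length X" "X ! (j2 - 1) = Term" "snd s2"
       "run X w (1, s0) t2 = Some (j2, s2)" unfolding Bo_def Reach_def by blast
    have "t = t2"
    proof (rule ccontr)
      assume "t \<noteq> t2"
      then consider "t < t2" | "t2 < t" by linarith
      then show False
      proof cases
        case 1
        have "run X w (1, s0) (Suc t) = None" using A1 halt_none[OF A1(2,3,4)] by simp
        then have "run X w (1, s0) t2 = None" using 1 run_none[of X w "(1, s0)" "Suc t" t2] by simp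
        then show False using B(5) by simp
      next
        case 2
        have "run X w (1, s0) (Suc t2) = None" using B halt_none[OF B(1,2,3)] by simp
        then have "run X w (1, s0) t = None" using 2 run_none[of X w "(1, s0)" "Suc t2" t] by simp
        then show False using A1(1) by simp
      qed
    qed
    then show r using A1 B by simp
  qed
qed


fun ok_b :: "nat \<Rightarrow> basic \<Rightarrow> bool" where
  "ok_b n (FIn m, MGet) = (1 \<le> m \<and> m \<le> n)"
| "ok_b n (FIn m, MSet b) = False"
| "ok_b n (FAux r, x) = True"
| "ok_b n (FOut, x) = True"

fun rep_f :: "instr list \<Rightarrow> nat \<Rightarrow> nat \<Rightarrow> basic \<Rightarrow> bexp" where
  "rep_f X n i (FIn m, MGet) = (if 1 \<le> m \<and> m \<le> n then BI (m - 1) else BC False)"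
| "rep_f X n i (FIn m, MSet b) = BC False"
| "rep_f X n i (FAux r, MGet) = BV (Bx X i r)"
| "rep_f X n i (FAux r, MSet b) = BC b"
| "rep_f X n i (FOut, MGet) = BV (Bo X i)"
| "rep_f X n i (FOut, MSet b) = BC b"

fun upd_b :: "basic \<Rightarrow> regs \<Rightarrow> regs" where
  "upd_b (FAux r, MSet b) s = ((fst s)(r := b), snd s)"
| "upd_b (FOut, MSet b) s = (fst s, b)"
| "upd_b a s = s"

lemma exec_stv: "length w = n \<Longrightarrow> exec_basic w a (stv X w i) =
   (if ok_b n a then Some (ev (rep_f X n i a) w, upd_b a (stv X w i)) else None)"
  by (cases a; case_tac aa; case_tac b) (auto simp: stv_def)

fun upd_u :: "instr \<Rightarrow> regs \<Rightarrow> regs" where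
  "upd_u (Plain a) s = upd_b a s"
| "upd_u (PosTest a) s = upd_b a s"
| "upd_u (NegTest a) s = upd_b a s"
| "upd_u u s = s"

fun dst :: "instr list \<Rightarrow> nat \<Rightarrow> nat \<Rightarrow> nat \<Rightarrow> instr \<Rightarrow> bexp" where
  "dst X n i j Term = BC False"
| "dst X n i j (Jump l) = BC (l \<noteq> 0 \<and> j = i + l)"
| "dst X n i j (Plain a) = BC (ok_b n a \<and> j = i + 1)"
| "dst X n i j (PosTest a) = (if ok_b n a then (if j = i + 1 then rep_f X n i a
      else if j = i + 2 then BN (rep_f X n i a) else BC False) else BC False)"
| "dst X n i j (NegTest a) = (if ok_b n a then (if j = i + 2 then rep_f X n i a
      else if j = i + 1 then BN (rep_f X n i a) else BC False) else BC False)"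

lemma nxt_stv: "length w = n \<Longrightarrow> 1 \<le> i \<Longrightarrow> i \<le> length X \<Longrightarrow>
  (nxt X w (i, stv X w i) = Some (j, s')) \<longleftrightarrow> (ev (dst X n i j (X ! (i - 1))) w \<and> s' = upd_u (X ! (i - 1)) (stv X w i))"
  by (cases "X ! (i - 1)") (auto simp: nxt.simps exec_stv)

fun nreg_b :: "instr list \<Rightarrow> nat \<Rightarrow> nat \<Rightarrow> basic \<Rightarrow> bexp" where
  "nreg_b X i r (FAux r', MSet b) = (if r' = r then BC b else BV (Bx X i r))"
| "nreg_b X i r a = BV (Bx X i r)"

fun nreg :: "instr list \<Rightarrow> nat \<Rightarrow> nat \<Rightarrow> instr \<Rightarrow> bexp" where
  "nreg X i r (Plain a) = nreg_b X i r a"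
| "nreg X i r (PosTest a) = nreg_b X i r a"
| "nreg X i r (NegTest a) = nreg_b X i r a"
| "nreg X i r u = BV (Bx X i r)"

fun nout_b :: "instr list \<Rightarrow> nat \<Rightarrow> basic \<Rightarrow> bexp" where
  "nout_b X i (FOut, MSet b) = BC b"
| "nout_b X i a = BV (Bo X i)"

fun nout :: "instr list \<Rightarrow> nat \<Rightarrow> instr \<Rightarrow> bexp" where
  "nout X i (Plain a) = nout_b X i a"
| "nout X i (PosTest a) = nout_b X i a"
| "nout X i (NegTest a) = nout_b X i a"
| "nout X i u = BV (Bo X i)"

lemma ev_nreg_b: "ev (nreg_b X i r a) w = fst (upd_b a (stv X w i)) r"
  by (cases a; case_tac aa; case_tac b) (auto simp: stv_def)
lemma ev_nreg: "ev (nreg X i r u) w = fst (upd_u u (stv X w i)) r"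
  by (cases u) (auto simp: ev_nreg_b stv_def)
lemma ev_nout_b: "ev (nout_b X i a) w = snd (upd_b a (stv X w i))"
  by (cases a; case_tac aa; case_tac b) (auto simp: stv_def)
lemma ev_nout: "ev (nout X i u) w = snd (upd_u u (stv X w i))"
  by (cases u) (auto simp: ev_nout_b stv_def)

fun baux :: "basic \<Rightarrow> nat list" where
  "baux (FAux r, m) = [r]"
| "baux a = []"

fun iaux :: "instr \<Rightarrow> nat list" where
  "iaux (Plain a) = baux a"
| "iaux (PosTest a) = baux a"
| "iaux (NegTest a) = baux a"
| "iaux u = []"

definition auxl :: "instr list \<Rightarrow> nat list" where
  "auxl X = concat (map iaux X)"

lemma len_iaux: "length (iaux u) \<le> 1"
proof -
  have "length (baux a) \<le> 1" for a by (cases a; case_tac aa) auto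
  then show ?thesis by (cases u) auto
qed

lemma len_auxl: "length (auxl X) \<le> length X"
proof (induction X)
  case Nil then show ?case by (simp add: auxl_def)
next
  case (Cons u X) then show ?case using len_iaux[of u] by (simp add: auxl_def)
qed

lemma atoms_rep: "atoms (rep_f X n i a) \<subseteq> insert (Bo X i) (Bx X i ` set (baux a))"
  by (cases a; case_tac aa; case_tac b) auto

lemma atoms_dst: "atoms (dst X n i j u) \<subseteq> insert (Bo X i) (Bx X i ` set (iaux u))"
  by (cases u) (auto dest: subsetD[OF atoms_rep])

lemma ins_rep: "ins_ok n (rep_f X n i a)"
  by (cases a; case_tac aa; case_tac b) auto

lemma ins_dst: "ins_ok n (dst X n i j u)"
  by (cases u) (auto simp: ins_rep)

lemma sz_rep: "sz (rep_f X n i a) = 1"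
  by (cases a; case_tac aa; case_tac b) auto

lemma sz_dst: "sz (dst X n i j u) \<le> 2"
  by (cases u) (auto simp: sz_rep le_Suc_eq)

lemma nreg_props: "r \<in> set (auxl X) \<Longrightarrow> atoms (nreg X i r u) \<subseteq> Bx X i ` set (auxl X) \<and> ins_ok n (nreg X i r u) \<and> sz (nreg X i r u) \<le> 1"
proof -
  assume r: "r \<in> set (auxl X)"
  have "atoms (nreg_b X i r a) \<subseteq> {Bx X i r} \<and> ins_ok n (nreg_b X i r a) \<and> sz (nreg_b X i r a) \<le> 1" for a
    by (cases a; case_tac aa; case_tac b) auto
  then have "atoms (nreg X i r u) \<subseteq> {Bx X i r} \<and> ins_ok n (nreg X i r u) \<and> sz (nreg X i r u) \<le> 1"
    by (cases u) auto
  then show ?thesis using r by blast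
qed

lemma nout_props: "atoms (nout X i u) \<subseteq> {Bo X i} \<and> ins_ok n (nout X i u) \<and> sz (nout X i u) \<le> 1"
proof -
  have "atoms (nout_b X i a) \<subseteq> {Bo X i} \<and> ins_ok n (nout_b X i a) \<and> sz (nout_b X i a) \<le> 1" for a
    by (cases a; case_tac aa; case_tac b) auto
  then show ?thesis by (cases u) auto
qed

definition levf :: "instr list \<Rightarrow> nat \<Rightarrow> (bool list \<Rightarrow> bool) list" where
  "levf X i = A X i # Bo X i # map (Bx X i) (auxl X)"

definition gA :: "instr list \<Rightarrow> nat \<Rightarrow> nat \<Rightarrow> nat \<Rightarrow> bexp" where
  "gA X n i j = BA (BV (A X i)) (dst X n i j (X ! (i - 1)))"

lemma gA_props:
  assumes "1 \<le> i" "i \<le> length X"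
  shows "atoms (gA X n i j) \<subseteq> set (levf X i) \<and> ins_ok n (gA X n i j) \<and> sz (gA X n i j) \<le> 4"
proof -
  have u: "X ! (i - 1) \<in> set X" using assms by simp
  have "set (iaux (X ! (i - 1))) \<subseteq> set (auxl X)" using u by (auto simp: auxl_def)
  then have "atoms (dst X n i j (X ! (i - 1))) \<subseteq> set (levf X i)"
    using atoms_dst[of X n i j "X ! (i - 1)"] by (auto simp: levf_def)
  moreover have "A X i \<in> set (levf X i)" by (simp add: levf_def)
  ultimately show ?thesis using ins_dst sz_dst[of X n i j "X ! (i - 1)"] by (auto simp: gA_def)
qed

lemma ev_gA:
  assumes "length w = n" "1 \<le> i" "i \<le> length X"
  shows "ev (gA X n i j) w = (A X i w \<and> ev (dst X n i j (X ! (i - 1))) w)"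
  by (simp add: gA_def)



lemma rec_gen:
  assumes "1 < j" "j \<le> length X" "length w = n"
  shows "(\<exists>s'. Reach X w j s' \<and> P s') \<longleftrightarrow>
    (\<exists>i\<in>{1..<j}. A X i w \<and> ev (dst X n i j (X ! (i - 1))) w \<and> P (upd_u (X ! (i - 1)) (stv X w i)))"
proof
  assume "\<exists>s'. Reach X w j s' \<and> P s'"
  then obtain s' where R: "Reach X w j s'" "P s'" by blast
  then obtain i where i: "1 \<le> i" "i < j" "A X i w" "nxt X w (i, stv X w i) = Some (j, s')"
    using reach_rec[of j X w s'] assms(1) by auto
  have "ev (dst X n i j (X ! (i - 1))) w \<and> s' = upd_u (X ! (i - 1)) (stv X w i)"
    using nxt_stv[OF assms(3) i(1), of X j s'] i assms(2) by simp
  then show "\<exists>i\<in>{1..<j}. A X i w \<and> ev (dst X n i j (X ! (i - 1))) w \<and> P (upd_u (X ! (i - 1)) (stv X w i))"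
    using i R(2) by auto
next
  assume "\<exists>i\<in>{1..<j}. A X i w \<and> ev (dst X n i j (X ! (i - 1))) w \<and> P (upd_u (X ! (i - 1)) (stv X w i))"
  then obtain i where i: "1 \<le> i" "i < j" "A X i w" "ev (dst X n i j (X ! (i - 1))) w"
    "P (upd_u (X ! (i - 1)) (stv X w i))" by auto
  have "nxt X w (i, stv X w i) = Some (j, upd_u (X ! (i - 1)) (stv X w i))"
    using nxt_stv[OF assms(3) i(1), of X j] i assms(2) by simp
  then have "Reach X w j (upd_u (X ! (i - 1)) (stv X w i))"
    using reach_rec[of j X w] assms(1) i by auto
  then show "\<exists>s'. Reach X w j s' \<and> P s'" using i(5) by blast
qed

lemma ev_bor_map: "ev (bor (map g [a..<b])) w = (\<exists>i\<in>{a..<b}. ev (g i) w)"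
  by (simp add: ev_bor)

lemma bor_map_props:
  assumes "\<And>i. i \<in> {1..<j} \<Longrightarrow> atoms (g i) \<subseteq> set (levf X i) \<and> ins_ok n (g i) \<and> sz (g i) \<le> 6"
    and "j \<le> length X"
  shows "atoms (bor (map g [1..<j])) \<subseteq> (\<Union>i\<in>{1..<j}. set (levf X i)) \<and> ins_ok n (bor (map g [1..<j]))
     \<and> sz (bor (map g [1..<j])) \<le> Suc (length X * 7)"
proof -
  have "sz (bor (map g [1..<j])) \<le> Suc (length (map g [1..<j]) * Suc 6)"
    by (rule sz_bor) (use assms(1) in auto)
  also have "\<dots> \<le> Suc (length X * 7)" using assms(2) by simp
  moreover have "atoms (bor (map g [1..<j])) \<subseteq> (\<Union>i\<in>{1..<j}. set (levf X i))"
  proof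
    fix x assume "x \<in> atoms (bor (map g [1..<j]))"
    then obtain i where i: "i \<in> {1..<j}" "x \<in> atoms (g i)" by (auto simp: atoms_bor)
    then show "x \<in> (\<Union>i\<in>{1..<j}. set (levf X i))" using assms(1)[OF i(1)] by blast
  qed
  moreover have "ins_ok n (bor (map g [1..<j]))" using assms(1) by (auto simp: ins_bor)
  ultimately show ?thesis by simp
qed

lemma lev_formula:
  assumes j: "1 \<le> j" "j \<le> length X" and f: "f \<in> set (levf X j)"
  shows "\<exists>e. atoms e \<subseteq> (\<Union>i\<in>{1..<j}. set (levf X i)) \<and> ins_ok n e \<and> sz e \<le> Suc (length X * 7) \<and>
     (\<forall>w. length w = n \<longrightarrow> ev e w = f w)"
proof (cases "j = 1")
  case True
  have R1: "Reach X w 1 s \<longleftrightarrow> s = s0" for w s by (rule reach_1)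
  have R1': "Reach X w (Suc 0) s \<longleftrightarrow> s = s0" for w s using R1 by simp
  have "A X 1 = (\<lambda>w. True)" unfolding A_def fun_eq_iff using R1 by blast
  moreover have "Bo X 1 = (\<lambda>w. False)" "Bx X 1 r = (\<lambda>w. False)" for r
    unfolding Bo_def Bx_def fun_eq_iff using R1 R1' by (auto simp: s0_def)
  ultimately have "A X 1 = (\<lambda>w. True)" "Bo X 1 = (\<lambda>w. False)" "Bx X 1 r = (\<lambda>w. False)" for r
    by blast+
  then have "\<exists>b. f = (\<lambda>w. b)" using f True by (auto simp: levf_def)
  then obtain b where "f = (\<lambda>w. b)" by blast
  then show ?thesis by (intro exI[of _ "BC b"]) simp
next
  case False
  then have j1: "1 < j" using j by simp
  have ui: "\<And>i. i \<in> {1..<j} \<Longrightarrow> 1 \<le> i \<and> i \<le> length X" using j by auto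
  consider "f = A X j" | "f = Bo X j" | r where "r \<in> set (auxl X)" "f = Bx X j r"
    using f by (auto simp: levf_def)
  then show ?thesis
  proof cases
    case 1
    define e where "e = bor (map (\<lambda>i. gA X n i j) [1..<j])"
    have gi: "atoms (gA X n i j) \<subseteq> set (levf X i) \<and> ins_ok n (gA X n i j) \<and> sz (gA X n i j) \<le> 6"
      if "i \<in> {1..<j}" for i
    proof -
      have u: "1 \<le> i" "i \<le> length X" using ui[OF that] by auto
      show ?thesis using gA_props[OF u, of n j] by simp
    qed
    have P: "atoms e \<subseteq> (\<Union>i\<in>{1..<j}. set (levf X i)) \<and> ins_ok n e \<and> sz e \<le> Suc (length X * 7)"
      unfolding e_def using gi j(2) by (rule bor_map_props)
    have "ev e w = f w" if "length w = n" for w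
    proof -
      have "ev e w = (\<exists>i\<in>{1..<j}. A X i w \<and> ev (dst X n i j (X ! (i - 1))) w)"
        by (simp add: e_def ev_bor_map gA_def)
      also have "\<dots> = (\<exists>s'. Reach X w j s' \<and> True)"
        using rec_gen[OF j1 j(2) that, of "\<lambda>_. True"] by simp
      also have "\<dots> = f w" using 1 by (simp add: A_def)
      finally show ?thesis .
    qed
    then show ?thesis using P by blast
  next
    case 2
    define e where "e = bor (map (\<lambda>i. BA (gA X n i j) (nout X i (X ! (i - 1)))) [1..<j])"
    have gi: "atoms (BA (gA X n i j) (nout X i (X ! (i - 1)))) \<subseteq> set (levf X i) \<and>
          ins_ok n (BA (gA X n i j) (nout X i (X ! (i - 1)))) \<and> sz (BA (gA X n i j) (nout X i (X ! (i - 1)))) \<le> 6"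
      if "i \<in> {1..<j}" for i
    proof -
      have u: "1 \<le> i" "i \<le> length X" using ui[OF that] by auto
      have G: "atoms (gA X n i j) \<subseteq> set (levf X i)" "ins_ok n (gA X n i j)" "sz (gA X n i j) \<le> 4"
        using gA_props[OF u, of n j] by simp_all
      have N: "atoms (nout X i (X ! (i - 1))) \<subseteq> {Bo X i}" "ins_ok n (nout X i (X ! (i - 1)))"
        "sz (nout X i (X ! (i - 1))) \<le> 1"
        using nout_props[of X i "X ! (i - 1)" n] by simp_all
      have B: "Bo X i \<in> set (levf X i)" by (simp add: levf_def)
      have "atoms (BA (gA X n i j) (nout X i (X ! (i - 1)))) \<subseteq> set (levf X i)"
        using G(1) N(1) B by auto
      then show ?thesis using G(2,3) N(2,3) by simp
    qed
    have P: "atoms e \<subseteq> (\<Union>i\<in>{1..<j}. set (levf X i)) \<and> ins_ok n e \<and> sz e \<le> Suc (length X * 7)"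
      unfolding e_def using gi j(2) by (rule bor_map_props)
    have "ev e w = f w" if "length w = n" for w
    proof -
      have "ev e w = (\<exists>i\<in>{1..<j}. A X i w \<and> ev (dst X n i j (X ! (i - 1))) w \<and>
               snd (upd_u (X ! (i - 1)) (stv X w i)))"
        by (simp add: e_def ev_bor_map gA_def ev_nout)
      also have "\<dots> = (\<exists>s'. Reach X w j s' \<and> snd s')"
        using rec_gen[OF j1 j(2) that, of "snd"] by simp
      also have "\<dots> = f w" using 2 by (simp add: Bo_def)
      finally show ?thesis .
    qed
    then show ?thesis using P by blast
  next
    case 3
    define e where "e = bor (map (\<lambda>i. BA (gA X n i j) (nreg X i r (X ! (i - 1)))) [1..<j])"
    have gi: "atoms (BA (gA X n i j) (nreg X i r (X ! (i - 1)))) \<subseteq> set (levf X i) \<and>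
          ins_ok n (BA (gA X n i j) (nreg X i r (X ! (i - 1)))) \<and> sz (BA (gA X n i j) (nreg X i r (X ! (i - 1)))) \<le> 6"
      if "i \<in> {1..<j}" for i
    proof -
      have u: "1 \<le> i" "i \<le> length X" using ui[OF that] by auto
      have G: "atoms (gA X n i j) \<subseteq> set (levf X i)" "ins_ok n (gA X n i j)" "sz (gA X n i j) \<le> 4"
        using gA_props[OF u, of n j] by simp_all
      have N: "atoms (nreg X i r (X ! (i - 1))) \<subseteq> Bx X i ` set (auxl X)" "ins_ok n (nreg X i r (X ! (i - 1)))"
        "sz (nreg X i r (X ! (i - 1))) \<le> 1"
        using nreg_props[OF 3(1), of i "X ! (i - 1)" n] by simp_all
      have B: "Bx X i ` set (auxl X) \<subseteq> set (levf X i)" by (auto simp: levf_def)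
      have "atoms (BA (gA X n i j) (nreg X i r (X ! (i - 1)))) \<subseteq> set (levf X i)"
        using G(1) N(1) B by auto
      then show ?thesis using G(2,3) N(2,3) by simp
    qed
    have P: "atoms e \<subseteq> (\<Union>i\<in>{1..<j}. set (levf X i)) \<and> ins_ok n e \<and> sz e \<le> Suc (length X * 7)"
      unfolding e_def using gi j(2) by (rule bor_map_props)
    have "ev e w = f w" if "length w = n" for w
    proof -
      have "ev e w = (\<exists>i\<in>{1..<j}. A X i w \<and> ev (dst X n i j (X ! (i - 1))) w \<and>
               fst (upd_u (X ! (i - 1)) (stv X w i)) r)"
        by (simp add: e_def ev_bor_map gA_def ev_nreg)
      also have "\<dots> = (\<exists>s'. Reach X w j s' \<and> fst s' r)"
        using rec_gen[OF j1 j(2) that, of "\<lambda>s. fst s r"] by simp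
      also have "\<dots> = f w" using 3(2) by (simp add: Bx_def)
      finally show ?thesis .
    qed
    then show ?thesis using P by blast
  qed
qed

lemma levels: "j \<le> length X \<Longrightarrow> cc n (j * ((length X + 2) * Suc (length X * 7))) (\<Union>i\<in>{1..j}. set (levf X i))"
proof (induction j)
  case 0 then show ?case using cc_empty by simp
next
  case (Suc j)
  define B where "B = (length X + 2) * Suc (length X * 7)"
  have c: "cc n (j * B) (\<Union>i\<in>{1..j}. set (levf X i))" using Suc by (simp add: B_def)
  have "\<forall>f\<in>set (levf X (Suc j)). \<exists>e. atoms e \<subseteq> (\<Union>i\<in>{1..j}. set (levf X i)) \<and> ins_ok n e \<and>
      sz e \<le> Suc (length X * 7) \<and> (\<forall>w. length w = n \<longrightarrow> ev e w = f w)"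
    using lev_formula[of "Suc j" X _ n] Suc.prems by (simp add: atLeastLessThanSuc_atLeastAtMost)
  from cc_list[OF c this] have c2: "cc n (j * B + length (levf X (Suc j)) * Suc (length X * 7))
     ((\<Union>i\<in>{1..j}. set (levf X i)) \<union> set (levf X (Suc j)))" .
  have "length (levf X (Suc j)) \<le> length X + 2" using len_auxl[of X] by (simp add: levf_def)
  then have "length (levf X (Suc j)) * Suc (length X * 7) \<le> B" unfolding B_def by (rule mult_le_mono1)
  then have le: "j * B + length (levf X (Suc j)) * Suc (length X * 7) \<le> Suc j * B" by simp
  have sub: "(\<Union>i\<in>{1..Suc j}. set (levf X i)) \<subseteq> (\<Union>i\<in>{1..j}. set (levf X i)) \<union> set (levf X (Suc j))"
    by (auto simp: le_Suc_eq)
  show ?case using cc_mono[OF c2 le sub] by (simp add: B_def)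
qed

lemma dir1_n:
  assumes comp: "computes X n g"
  shows "\<exists>C. wf_circuit n C \<and> length C \<le> 9 * (length X + 2) ^ 3 \<and> (\<forall>w. length w = n \<longrightarrow> circuit_out w C = g w)"
proof -
  define k where "k = length X"
  define S where "S = (\<Union>i\<in>{1..k}. set (levf X i))"
  have c: "cc n (k * ((k + 2) * Suc (k * 7))) S" using levels[of k X n] by (simp add: k_def S_def)
  define e where "e = bor (map (\<lambda>j. BV (Bo X j)) (filter (\<lambda>j. X ! (j - 1) = Term) [1..<Suc k]))"
  have at: "atoms e \<subseteq> S"
  proof
    fix x assume "x \<in> atoms e"
    then have "x \<in> (\<Union>j\<in>set (filter (\<lambda>j. X ! (j - 1) = Term) [1..<Suc k]). {Bo X j})"
      by (simp add: e_def atoms_bor del: upt_Suc)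
    then obtain j where j0: "j \<in> set (filter (\<lambda>j. X ! (j - 1) = Term) [1..<Suc k])" "x = Bo X j" by blast
    then have j: "j \<in> {1..k}" "x = Bo X j" by auto
    then show "x \<in> S" unfolding S_def levf_def by (intro UN_I[OF j(1)]) simp
  qed
  have ins: "ins_ok n e" by (simp add: e_def ins_bor)
  have "sz e \<le> Suc (length (filter (\<lambda>j. X ! (j - 1) = Term) [1..<Suc k]) * Suc 1)"
    unfolding e_def using sz_bor[of "map (\<lambda>j. BV (Bo X j)) (filter (\<lambda>j. X ! (j - 1) = Term) [1..<Suc k])" 1]
    by (simp del: upt_Suc)
  also have "\<dots> \<le> Suc (k * 2)"
  proof -
    have "length (filter (\<lambda>j. X ! (j - 1) = Term) [1..<Suc k]) \<le> k"
      using length_filter_le[of "\<lambda>j. X ! (j - 1) = Term" "[1..<Suc k]"] by (simp del: upt_Suc)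
    then show ?thesis by simp
  qed
  finally have szb: "sz e \<le> Suc (k * 2)" .
  have ev: "ev e w = g w" if "length w = n" for w
  proof -
    have T: "terminates X w 1 s0 (g w)" using comp that by (simp add: computes_def s0_def)
    have "ev e w = (\<exists>j\<in>set (filter (\<lambda>j. X ! (j - 1) = Term) [1..<Suc k]). Bo X j w)"
      by (simp add: e_def ev_bor del: upt_Suc)
    also have "\<dots> = (\<exists>j. 1 \<le> j \<and> j \<le> length X \<and> X ! (j - 1) = Term \<and> Bo X j w)"
      by (auto simp: k_def simp del: upt_Suc)
    finally show ?thesis using final_char[OF T] by simp
  qed
  have "cc n (k * ((k + 2) * Suc (k * 7)) + Suc (k * 2)) (insert g S)"
  proof -
    have evg: "\<forall>w. length w = n \<longrightarrow> ev e w = g w" using ev by blast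
    show ?thesis by (rule cc_ev'[OF c at ins evg szb])
  qed
  from cc_out[OF this] obtain C where C: "wf_circuit n C"
    "length C \<le> Suc (k * ((k + 2) * Suc (k * 7)) + Suc (k * 2))" "\<forall>w. length w = n \<longrightarrow> circuit_out w C = g w"
    by blast
  have "Suc (k * ((k + 2) * Suc (k * 7)) + Suc (k * 2)) \<le> 9 * (k + 2) ^ 3"
  proof -
    have a: "k * ((k + 2) * Suc (k * 7)) \<le> (k + 2) * ((k + 2) * (7 * (k + 2)))"
      by (intro mult_le_mono) simp_all
    have a2: "(k + 2) * ((k + 2) * (7 * (k + 2))) = 7 * (k + 2) ^ 3"
      by (simp add: power3_eq_cube algebra_simps)
    have b: "k + 2 \<le> (k + 2) ^ 3" by (rule self_le_power) simp_all
    show ?thesis using a a2 b by linarith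
  qed
  then have "length C \<le> 9 * (length X + 2) ^ 3" using C(2) unfolding k_def by linarith
  then show ?thesis using C(1,3) by blast
qed

lemma dir1: "lang_of ` P_lis \<subseteq> P_poly"
proof
  fix L assume "L \<in> lang_of ` P_lis"
  then obtain F where F: "F \<in> P_lis" and L: "L = lang_of F" by blast
  then obtain h :: "nat poly" where h: "\<forall>n. \<exists>X. X \<in> IS_br \<and> computes X n (F n) \<and> length X \<le> poly h n"
    by (auto simp: P_lis_def)
  have "\<forall>n. \<exists>C. wf_circuit n C \<and> length C \<le> poly (smult 9 ((h + [:2:]) ^ 3)) n \<and>
      (\<forall>w. length w = n \<longrightarrow> (circuit_out w C \<longleftrightarrow> w \<in> L))"
  proof
    fix n
    obtain X where X: "computes X n (F n)" "length X \<le> poly h n" using h by blast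
    obtain C where C: "wf_circuit n C" "length C \<le> 9 * (length X + 2) ^ 3"
      "\<forall>w. length w = n \<longrightarrow> circuit_out w C = F n w" using dir1_n[OF X(1)] by blast
    have "(length X + 2) ^ 3 \<le> (poly h n + 2) ^ 3" using X(2) by (intro power_mono) simp_all
    then have "9 * (length X + 2) ^ 3 \<le> 9 * (poly h n + 2) ^ 3" by simp
    then have "length C \<le> 9 * (poly h n + 2) ^ 3" using C(2) by linarith
    moreover have "poly (smult 9 ((h + [:2:]) ^ 3)) n = 9 * (poly h n + 2) ^ 3" by (simp add: poly_power)
    ultimately have "length C \<le> poly (smult 9 ((h + [:2:]) ^ 3)) n" by simp
    moreover have "\<forall>w. length w = n \<longrightarrow> (circuit_out w C \<longleftrightarrow> w \<in> L)"
      using C(3) by (simp add: L lang_of_def)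
    ultimately show "\<exists>C. wf_circuit n C \<and> length C \<le> poly (smult 9 ((h + [:2:]) ^ 3)) n \<and>
      (\<forall>w. length w = n \<longrightarrow> (circuit_out w C \<longleftrightarrow> w \<in> L))" using C(1) by blast
  qed
  then show "L \<in> P_poly" unfolding P_poly_def by blast
qed

lemma cv_take: "k \<le> length C \<Longrightarrow> take k (circuit_vals w C) = circuit_vals w (take k C)"
proof (induction C arbitrary: k rule: rev_induct)
  case Nil then show ?case by (simp add: circuit_vals_def)
next
  case (snoc g C)
  show ?case
  proof (cases "k \<le> length C")
    case True then show ?thesis using snoc by (simp add: cv_snoc)
  next
    case False then have "k = Suc (length C)" using snoc.prems by simp
    then show ?thesis by (simp add: cv_snoc)
  qed
qed

lemma cv_nth: "k < length C \<Longrightarrow> circuit_vals w C ! k = gate_val w (circuit_vals w (take k C)) (C ! k)"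
proof -
  assume k: "k < length C"
  have "take (Suc k) C = take k C @ [C ! k]" using k by (simp add: take_Suc_conv_app_nth)
  then have "circuit_vals w (take (Suc k) C) = circuit_vals w (take k C) @ [gate_val w (circuit_vals w (take k C)) (C ! k)]"
    by (simp add: cv_snoc)
  moreover have "circuit_vals w C ! k = take (Suc k) (circuit_vals w C) ! k" by simp
  moreover have "take (Suc k) (circuit_vals w C) = circuit_vals w (take (Suc k) C)"
    using k by (intro cv_take) simp
  moreover have "length (circuit_vals w (take k C)) = k" using k by simp
  ultimately show ?thesis by (simp add: nth_append)
qed


definition gcode :: "nat \<Rightarrow> gate \<Rightarrow> instr list" where
 "gcode k g = (case g of
   GIn j \<Rightarrow> [PosTest (FIn (j+1), MGet), Plain (FAux (k+1), MSet True), Jump 1, Jump 1]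
 | GConst b \<Rightarrow> [Plain (FAux (k+1), MSet b), Jump 1, Jump 1, Jump 1]
 | GNot i \<Rightarrow> [NegTest (FAux (i+1), MGet), Plain (FAux (k+1), MSet True), Jump 1, Jump 1]
 | GAnd i j \<Rightarrow> [NegTest (FAux (i+1), MGet), Jump 3, PosTest (FAux (j+1), MGet), Plain (FAux (k+1), MSet True)]
 | GOr i j \<Rightarrow> [PosTest (FAux (i+1), MGet), Plain (FAux (k+1), MSet True), PosTest (FAux (j+1), MGet), Plain (FAux (k+1), MSet True)])"

lemma gcode_len[simp]: "length (gcode k g) = 4"
  by (cases g) (auto simp: gcode_def)

definition ctail :: "nat \<Rightarrow> instr list" where
  "ctail m = [PosTest (FAux m, MGet), Plain (FOut, MSet True), Term]"

definition cprog :: "gate list \<Rightarrow> instr list" where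
  "cprog C = concat (map (\<lambda>k. gcode k (C ! k)) [0..<length C]) @ ctail (length C)"

lemma concat4_len: "(\<And>k. length (f k) = 4) \<Longrightarrow> length (concat (map f [0..<m])) = 4 * m"
  by (induction m) auto

lemma concat4_nth: "(\<And>k. length (f k) = (4::nat)) \<Longrightarrow> k < m \<Longrightarrow> d < 4 \<Longrightarrow>
   concat (map f [0..<m]) ! (4 * k + d) = f k ! d"
proof (induction m)
  case 0 then show ?case by simp
next
  case (Suc m)
  show ?case
  proof (cases "k < m")
    case True
    then have "4 * k + d < length (concat (map f [0..<m]))" using Suc by (simp add: concat4_len)
    then show ?thesis using Suc True by (simp add: nth_append)
  next
    case False then have "k = m" using Suc by simp
    then show ?thesis using Suc by (simp add: nth_append concat4_len)
  qed
qed

lemma cprog_len: "length (cprog C) = 4 * length C + 3"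
  by (simp add: cprog_def concat4_len ctail_def)

lemma cprog_nth: "k < length C \<Longrightarrow> d < 4 \<Longrightarrow> cprog C ! (4 * k + d) = gcode k (C ! k) ! d"
  unfolding cprog_def
  by (simp add: nth_append concat4_len concat4_nth)

lemma cprog_nth_tail: "d < 3 \<Longrightarrow> cprog C ! (4 * length C + d) = ctail (length C) ! d"
  unfolding cprog_def by (simp add: nth_append concat4_len)

definition cst :: "bool list \<Rightarrow> nat \<Rightarrow> regs" where
  "cst vs k = (\<lambda>r. if 1 \<le> r \<and> r \<le> k then vs ! (r - 1) else False, False)"

lemma cst_suc: "cst vs (Suc k) = ((fst (cst vs k))(Suc k := vs ! k), False)"
  unfolding cst_def apply (simp only: prod.inject fst_conv) apply (rule conjI, rule ext) 
  apply (case_tac "x = Suc k") apply simp_all done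

lemma cst_same: "\<not> vs ! k \<Longrightarrow> cst vs (Suc k) = cst vs k"
  by (auto simp: cst_def le_Suc_eq)

lemma nxt_Suc: "nxt X w (Suc i, s) = (if i < length X then (case X ! i of
      Term \<Rightarrow> None
    | Jump l \<Rightarrow> if l = 0 then None else Some (Suc i + l, s)
    | Plain a \<Rightarrow> (case exec_basic w a s of None \<Rightarrow> None | Some (rep, s') \<Rightarrow> Some (Suc (Suc i), s'))
    | PosTest a \<Rightarrow> (case exec_basic w a s of None \<Rightarrow> None
         | Some (rep, s') \<Rightarrow> Some (if rep then Suc (Suc i) else Suc (Suc (Suc i)), s'))
    | NegTest a \<Rightarrow> (case exec_basic w a s of None \<Rightarrow> None
         | Some (rep, s') \<Rightarrow> Some (if rep then Suc (Suc (Suc i)) else Suc (Suc i), s'))) else None)"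
  by (simp del: nxt.simps add: nxt.simps[of X w "Suc i"] split: instr.splits option.splits prod.splits)

declare nxt.simps[simp del]

lemma add3: "(n::nat) + 3 = Suc (Suc (Suc n))" by simp

lemma seg:
  assumes wf: "\<forall>k<length C. gate_ok n k (C!k)" and len: "length w = n" and k: "k < length C"
  and T: "terminates (cprog C) w (Suc (Suc (Suc (Suc (Suc (4*k)))))) (cst (circuit_vals w C) (Suc k)) r"
  shows "terminates (cprog C) w (Suc (4*k)) (cst (circuit_vals w C) k) r"
proof -
  define vs where "vs = circuit_vals w C"
  define X where "X = cprog C"
  define f where "f = (\<lambda>r. if 1 \<le> r \<and> r \<le> k then vs ! (r - 1) else False)"
  have cstk: "cst vs k = (f, False)" by (simp add: cst_def f_def)
  have Tt: "vs ! k \<Longrightarrow> terminates X w (Suc (Suc (Suc (Suc (Suc (4*k)))))) (f(Suc k := True), False) r"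
    using T cst_suc[of vs k] cstk unfolding vs_def X_def by simp
  have Tf: "\<not> vs ! k \<Longrightarrow> terminates X w (Suc (Suc (Suc (Suc (Suc (4*k)))))) (f, False) r"
    using T cst_same[of vs k] cstk unfolding vs_def X_def by simp
  have L: "Suc (Suc (Suc (4*k))) < length X" using k by (simp add: X_def cprog_len)
  have L': "4*k < length X" "Suc (4*k) < length X" "Suc (Suc (4*k)) < length X" using L by auto
  have X0: "X ! (4*k) = gcode k (C!k) ! 0" using cprog_nth[of k C 0] k by (simp add: X_def)
  have X1: "X ! Suc (4*k) = gcode k (C!k) ! 1" using cprog_nth[of k C 1] k by (simp add: X_def)
  have X2: "X ! Suc (Suc (4*k)) = gcode k (C!k) ! 2" using cprog_nth[of k C 2] k by (simp add: X_def)
  have X3: "X ! Suc (Suc (Suc (4*k))) = gcode k (C!k) ! 3" using cprog_nth[of k C 3] k by (simp add: X_def add3)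
  have vk: "vs ! k = gate_val w (take k vs) (C!k)"
    using cv_nth[of k C w] cv_take[of k C w] k by (simp add: vs_def)
  have fa: "\<And>i. i < k \<Longrightarrow> f (Suc i) = vs ! i" by (simp add: f_def)
  have tk: "\<And>i. i < k \<Longrightarrow> take k vs ! i = vs ! i" by simp
  have fk: "f (Suc k) = False" by (simp add: f_def)
  note S = nxt_Suc X0 X1 X2 X3 L L' gcode_def fa add3
  have "terminates X w (Suc (4*k)) (f, False) r"
  proof (cases "C ! k")
    case (GIn j)
    then have j: "j < length w" using wf k len by auto
    have v: "vs ! k = w ! j" using vk GIn by simp
    show ?thesis
      by (insert GIn j v Tt Tf, cases "w ! j"; (rule nxt_term, (simp add: S; fail))+; simp)
  next
    case (GConst b)
    have v: "vs ! k = b" using vk GConst by simp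
    show ?thesis
      by (insert GConst v Tt Tf fk, cases b; (rule nxt_term, (simp add: S; fail))+; simp add: fun_upd_idem)
  next
    case (GNot i)
    then have i: "i < k" using wf k by auto
    have v: "vs ! k = (\<not> vs ! i)" using vk GNot i tk by simp
    show ?thesis
      by (insert GNot i v Tt Tf, cases "vs ! i"; (rule nxt_term, (simp add: S; fail))+; simp)
  next
    case (GAnd i j)
    then have i: "i < k" "j < k" using wf k by auto
    have v: "vs ! k = (vs ! i \<and> vs ! j)" using vk GAnd i tk by simp
    show ?thesis
      by (insert GAnd i v Tt Tf, cases "vs ! i"; cases "vs ! j"; (rule nxt_term, (simp add: S; fail))+; simp)
  next
    case (GOr i j)
    then have i: "i < k" "j < k" using wf k by auto
    have v: "vs ! k = (vs ! i \<or> vs ! j)" using vk GOr i tk by simp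
    show ?thesis
      by (insert GOr i v Tt Tf, cases "vs ! i"; cases "vs ! j"; (rule nxt_term, (simp add: S; fail))+; simp)
  qed
  then show ?thesis using cstk by (simp add: X_def vs_def)
qed

lemma tailrun:
  assumes m: "0 < length C"
  shows "terminates (cprog C) w (Suc (4 * length C)) (cst (circuit_vals w C) (length C)) (circuit_vals w C ! (length C - 1))"
proof -
  define vs where "vs = circuit_vals w C"
  define X where "X = cprog C"
  define m where "m = length C"
  define f where "f = (\<lambda>r. if 1 \<le> r \<and> r \<le> m then vs ! (r - 1) else False)"
  have cstk: "cst vs m = (f, False)" by (simp add: cst_def f_def)
  have fm: "f m = vs ! (m - Suc 0)" using m unfolding f_def m_def by (auto simp: Suc_le_eq)
  have L: "4*m < length X" "Suc (4*m) < length X" "Suc (Suc (4*m)) < length X"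
    by (simp_all add: X_def m_def cprog_len)
  have X0: "X ! (4*m) = PosTest (FAux m, MGet)" using cprog_nth_tail[of 0 C] by (simp add: X_def m_def ctail_def)
  have X1: "X ! Suc (4*m) = Plain (FOut, MSet True)" using cprog_nth_tail[of 1 C] by (simp add: X_def m_def ctail_def)
  have X2: "X ! Suc (Suc (4*m)) = Term" using cprog_nth_tail[of 2 C] by (simp add: X_def m_def ctail_def)
  have H: "terminates X w (Suc (Suc (Suc (4*m)))) s (snd s)" for s
    by (rule terminates.halt) (use L X2 in auto)
  have "terminates X w (Suc (4 * m)) (f, False) (vs ! (m - 1))"
  proof (cases "vs ! (m - Suc 0)")
    case True
    note vt = this
    have vt_eq: "vs ! (m - 1) = snd (f, True)" using vt by simp
    show ?thesis
      apply (rule nxt_term, simp add: nxt_Suc X0 L fm vt)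
      apply (rule nxt_term, simp add: nxt_Suc X1 L)
      apply (subst vt_eq)
      apply (rule H)
      done
  next
    case False
    show ?thesis
      apply (rule nxt_term, simp add: nxt_Suc X0 L fm False)
      using H[of "(f, False)"] False by simp
  qed
  then show ?thesis using cstk by (simp add: vs_def X_def m_def)
qed

lemma cprog_correct:
  assumes wf: "wf_circuit n C" and len: "length w = n"
  shows "terminates (cprog C) w 1 (\<lambda>_. False, False) (circuit_out w C)"
proof -
  have m: "0 < length C" and g: "\<forall>k<length C. gate_ok n k (C!k)" using wf by (auto simp: wf_circuit_def)
  have main: "terminates (cprog C) w (Suc (4 * (length C - d))) (cst (circuit_vals w C) (length C - d))
                (circuit_vals w C ! (length C - 1))" if "d \<le> length C" for d
    using that
  proof (induction d)
    case 0 then show ?case using tailrun[OF m] by simp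
  next
    case (Suc d)
    define k where "k = length C - Suc d"
    have k: "k < length C" and kk: "Suc k = length C - d" using Suc.prems by (auto simp: k_def)
    have "terminates (cprog C) w (Suc (Suc (Suc (Suc (Suc (4*k)))))) (cst (circuit_vals w C) (Suc k))
                (circuit_vals w C ! (length C - 1))"
    proof -
      have e: "Suc (Suc (Suc (Suc (Suc (4*k))))) = Suc (4*(length C - d))" using kk by simp
      show ?thesis unfolding e kk using Suc.IH Suc.prems by simp
    qed
    from seg[OF g len k this] show ?case by (simp add: k_def)
  qed
  from main[of "length C"] have "terminates (cprog C) w 1 (cst (circuit_vals w C) 0) (circuit_vals w C ! (length C - 1))"
    by simp
  moreover have "cst (circuit_vals w C) 0 = (\<lambda>_. False, False)" by (simp add: cst_def)
  moreover have "circuit_out w C = circuit_vals w C ! (length C - 1)"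
    using m cv_len[of w C] by (cases "circuit_vals w C = []") (simp_all add: circuit_out_def last_conv_nth)
  ultimately show ?thesis by simp
qed

lemma cprog_IS: "C \<noteq> [] \<Longrightarrow> cprog C \<in> IS_br"
proof -
  assume "C \<noteq> []"
  have "instr_ok u" if "u \<in> set (gcode k g)" for u k g
    using that by (cases g) (auto simp: gcode_def)
  then show ?thesis using \<open>C \<noteq> []\<close> by (auto simp: IS_br_def cprog_def ctail_def Suc_le_eq)
qed

lemma dir2: "P_poly \<subseteq> lang_of ` P_lis"
proof
  fix L assume "L \<in> P_poly"
  then obtain h :: "nat poly" where h: "\<forall>n. \<exists>C. wf_circuit n C \<and> length C \<le> poly h n \<and>
      (\<forall>w. length w = n \<longrightarrow> (circuit_out w C \<longleftrightarrow> w \<in> L))" by (auto simp: P_poly_def)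
  define F where "F = (\<lambda>(n::nat) w. w \<in> L)"
  have "F \<in> P_lis"
    unfolding P_lis_def
  proof (intro CollectI exI[of _ "smult 4 h + [:3:]"] allI)
    fix n
    obtain C where C: "wf_circuit n C" "length C \<le> poly h n"
      "\<forall>w. length w = n \<longrightarrow> (circuit_out w C \<longleftrightarrow> w \<in> L)" using h by blast
    have "computes (cprog C) n (F n)"
      unfolding computes_def F_def using cprog_correct[OF C(1)] C(3) by auto
    moreover have "length (cprog C) \<le> poly (smult 4 h + [:3:]) n"
      using C(2) by (simp add: cprog_len)
    ultimately show "\<exists>X. X \<in> IS_br \<and> computes X n (F n) \<and> length X \<le> poly (smult 4 h + [:3:]) n"
      using cprog_IS C(1) by (auto simp: wf_circuit_def)
  qed
  moreover have "lang_of F = L" by (simp add: lang_of_def F_def)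
  ultimately show "L \<in> lang_of ` P_lis" by blast
qed


theorem theorem6:
  shows "lang_of ` P_lis = P_poly"
  using dir1 dir2 by blast

end
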